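(* Assume (MA1), (MA2), (MA5) and (MA6) hold and let the sequences be generated by Algorithm R2N. If the algorithm generates only finitely many successful iterations, then there is $x^*\in\mathbb{R}^n$ with $x_k=x^*$ for all sufficiently large $k$, and $x^*$ is first-order stationary, i.e. $0\in\nabla f(x^* )+\partial h(x^* )$.
   Context: Setting: $f:\mathbb{R}^n\to\mathbb{R}$ continuously differentiable, $h:\mathbb{R}^n\to\mathbb{R}\cup\{+\infty\}$ proper lower semicontinuous; $\partial$ = limiting subdifferential; $\|\cdot\|$ Euclidean norm on vectors, spectral norm on matrices. A function $g$ is prox-bounded if there exist $\nu>0$, $x$ with $\inf_y g(y)+\frac1{2\nu}\|y-x\|^2>-\infty$; its threshold is the supremum of such $\nu$. For each $x$, $B(x)$ is symmetric and $\psi(\cdot;x):\mathbb{R}^n\to\mathbb{R}\cup\{+\infty\}$. $\varphi(s;x)=f(x)+\nabla f(x)^Ts+\tfrac12s^TB(x)s$, $m(s;x,\sigma)=\varphi(s;x)+\tfrac12\sigma\|s\|^2+\psi(s;x)$; $\varphi_{cp}(s;x)=f(x)+\nabla f(x)^Ts$, $m_{cp}(s;x,\nu^{-1})=\varphi_{cp}(s;x)+\tfrac12\nu^{-1}\|s\|^2+\psi(s;x)$, $P_{cp}(x,\nu^{-1})=\operatorname{argmin}_s m_{cp}(s;x,\nu^{-1})$, and for $s_{cp}\in P_{cp}(x,\nu^{-1})$, $\xi_{cp}(x,\nu^{-1})=f(x)+h(x)-(\varphi_{cp}(s_{cp};x)+\psi(s_{cp};x))$. (MA1): for every $x$, $\psi(\cdot;x)$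 is proper, lsc, prox-bounded with threshold $\lambda_x$, $\psi(0;x)=h(x)$, $\partial\psi(0;x)=\partial h(x)$. (MA2): there is $\lambda\in(0,+\infty]$ with $\lambda_x\ge\lambda$ for all $x$ (convention $1/\infty=0$). (MA5): there is $\kappa_m>0$ such that for all $k$, $|(f+h)(x_k+s_k)-(\varphi(s_k;x_k)+\psi(s_k;x_k))|\le\kappa_m(1+\|B_k\|)\|s_k\|^2$. (MA6): there are $\mu>0$ and $0\le p\le1$ such that $\|B_k\|\le\mu(1+|\mathcal S_k|^p)$ for all $k\in\mathbb N$ (equivalently $\max_{0\le j\le k}\|B_j\|\le\mu(1+|\mathcal S_k|^p)$ for all $k$). Algorithm R2N: constants $0<\theta_1<1<\theta_2$, $0<\eta_1\le\eta_2<1$, $0<\gamma_3\le1<\gamma_1\le\gamma_2$; $x_0$ with $h(x_0)<\infty$, $\sigma_0>0$. For $k=0,1,\dots$: choose symmetric $B_k=B(x_k)$; set $\nu_k=\theta_1/(\|B_k\|+\sigma_k)$; compute $s_{k,cp}\in P_{cp}(x_k,\nu_k^{-1})$ and $\xi_{cp}(x_k,\nu_k^{-1})$ (using $s_{k,cp}$); compute $s_k$ with $m(s_k;x_k,\sigma_k)\le m(s_{k,cp};x_k,\sigma_k)$; if $\|s_k\|>\theta_2\|s_{k,cp}\|$, reset $s_k=s_{k,cp}$; compute $\rho_k=\frac{(f+h)(x_k)-(f+h)(x_k+s_k)}{\varphi(0;x_k)+\psi(0;x_k)-\varphi(s_k;x_k)-\psi(s_k;x_k)}$ (extended arithmetic: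 $\pm\infty\cdot0=0$, $(\pm\infty)/(\pm\infty)=0$); if $\rho_k\ge\eta_1$ set $x_{k+1}=x_k+s_k$, else $x_{k+1}=x_k$; choose $\sigma_{k+1}\in[\gamma_3\sigma_k,\sigma_k]$ if $\rho_k\ge\eta_2$ (very successful), $\sigma_{k+1}\in[\sigma_k,\gamma_1\sigma_k]$ if $\eta_1\le\rho_k<\eta_2$, $\sigma_{k+1}\in[\gamma_1\sigma_k,\gamma_2\sigma_k]$ if $\rho_k<\eta_1$ (unsuccessful). $\mathcal S=\{k:\rho_k\ge\eta_1\}$ (successful iterations), $\mathcal S_k=\{i\in\mathcal S:i\le k\}$, $\mathcal U=\mathbb N\setminus\mathcal S$, $\mathcal U_k=\{i\in\mathcal U:i\le k\}$. *)

theory Defs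
  imports "HOL-Analysis.Analysis"
begin

type_synonym 'n vec = "real ^ 'n"
type_synonym 'n mat = "real ^ 'n ^ 'n"

definition mnorm :: "'n::finite mat \<Rightarrow> real" where
  "mnorm B = onorm (\<lambda>v. B *v v)"

definition symmetric_mat :: "'n::finite mat \<Rightarrow> bool" where
  "symmetric_mat B \<longleftrightarrow> transpose B = B"

definition proper_fun :: "('a \<Rightarrow> ereal) \<Rightarrow> bool" where
  "proper_fun g \<longleftrightarrow> (\<forall>x. g x \<noteq> -\<infinity>) \<and> (\<exists>x. g x \<noteq> \<infinity>)"

definition lsc_fun :: "('a::metric_space \<Rightarrow> ereal) \<Rightarrow> bool" where
  "lsc_fun g \<longleftrightarrow> (\<forall>x X. X \<longlonglongrightarrow> x \<longrightarrow> g x \<le> liminf (\<lambda>k. g (X k)))"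

definition prox_bounded_with :: "('n::finite vec \<Rightarrow> ereal) \<Rightarrow> real \<Rightarrow> bool" where
  "prox_bounded_with g \<nu> \<longleftrightarrow> \<nu> > 0 \<and>
     (\<exists>x. (INF y. g y + ereal ((norm (y - x))\<^sup>2 / (2 * \<nu>))) > -\<infinity>)"

definition prox_bounded :: "('n::finite vec \<Rightarrow> ereal) \<Rightarrow> bool" where
  "prox_bounded g \<longleftrightarrow> (\<exists>\<nu>. prox_bounded_with g \<nu>)"

definition prox_threshold :: "('n::finite vec \<Rightarrow> ereal) \<Rightarrow> ereal" where
  "prox_threshold g = (SUP \<nu> \<in> {\<nu>. prox_bounded_with g \<nu>}. ereal \<nu>)"

definition frechet_subdiff :: "('n::finite vec \<Rightarrow> ereal) \<Rightarrow> 'n vec \<Rightarrow> 'n vec set" where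
  "frechet_subdiff g x = {v. \<bar>g x\<bar> \<noteq> \<infinity> \<and>
     (\<forall>\<epsilon>>0. \<exists>\<delta>>0. \<forall>y. norm (y - x) < \<delta> \<longrightarrow>
        g y \<ge> g x + ereal (v \<bullet> (y - x) - \<epsilon> * norm (y - x)))}"

definition limiting_subdiff :: "('n::finite vec \<Rightarrow> ereal) \<Rightarrow> 'n vec \<Rightarrow> 'n vec set" where
  "limiting_subdiff g x = {v. \<bar>g x\<bar> \<noteq> \<infinity> \<and>
     (\<exists>X V. X \<longlonglongrightarrow> x \<and> (\<lambda>k. g (X k)) \<longlonglongrightarrow> g x \<and> V \<longlonglongrightarrow> v \<and>
            (\<forall>k. V k \<in> frechet_subdiff g (X k)))}"

definition argmin_set :: "('a \<Rightarrow> ereal) \<Rightarrow> 'a set" where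
  "argmin_set F = {s. \<forall>t. F s \<le> F t}"

definition phi_model :: "('n::finite vec \<Rightarrow> real) \<Rightarrow> ('n vec \<Rightarrow> 'n vec) \<Rightarrow> 'n mat
    \<Rightarrow> 'n vec \<Rightarrow> 'n vec \<Rightarrow> real" where
  "phi_model f g B x s = f x + g x \<bullet> s + (s \<bullet> (B *v s)) / 2"

definition phi_cp :: "('n::finite vec \<Rightarrow> real) \<Rightarrow> ('n vec \<Rightarrow> 'n vec) \<Rightarrow> 'n vec \<Rightarrow> 'n vec \<Rightarrow> real" where
  "phi_cp f g x s = f x + g x \<bullet> s"

text \<open>m(s;x,sigma) = phi(s;x) + sigma |s|^2/2 + psi(s;x); psi x s stands for psi(s;x).\<close>
definition m_model :: "('n::finite vec \<Rightarrow> real) \<Rightarrow> ('n vec \<Rightarrow> 'n vec) \<Rightarrow> 'n mat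
    \<Rightarrow> ('n vec \<Rightarrow> 'n vec \<Rightarrow> ereal) \<Rightarrow> 'n vec \<Rightarrow> real \<Rightarrow> 'n vec \<Rightarrow> ereal" where
  "m_model f g B \<psi> x \<sigma> s = ereal (phi_model f g B x s + \<sigma> * (norm s)\<^sup>2 / 2) + \<psi> x s"

text \<open>m_cp(s;x,nu^{-1}) = phi_cp(s;x) + |s|^2/(2 nu) + psi(s;x).\<close>
definition m_cp :: "('n::finite vec \<Rightarrow> real) \<Rightarrow> ('n vec \<Rightarrow> 'n vec)
    \<Rightarrow> ('n vec \<Rightarrow> 'n vec \<Rightarrow> ereal) \<Rightarrow> 'n vec \<Rightarrow> real \<Rightarrow> 'n vec \<Rightarrow> ereal" where
  "m_cp f g \<psi> x \<nu> s = ereal (phi_cp f g x s + (norm s)\<^sup>2 / (2 * \<nu>)) + \<psi> x s"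

text \<open>Ratio rho_k in extended arithmetic (ereal: infinity * 0 = 0, inverse infinity = 0).\<close>
definition rho_ratio :: "('n::finite vec \<Rightarrow> real) \<Rightarrow> ('n vec \<Rightarrow> 'n vec) \<Rightarrow> ('n vec \<Rightarrow> ereal)
    \<Rightarrow> 'n mat \<Rightarrow> ('n vec \<Rightarrow> 'n vec \<Rightarrow> ereal) \<Rightarrow> 'n vec \<Rightarrow> 'n vec \<Rightarrow> ereal" where
  "rho_ratio f g h B \<psi> x s =
     ((ereal (f x) + h x) - (ereal (f (x + s)) + h (x + s))) /
     ((ereal (phi_model f g B x 0) + \<psi> x 0) - (ereal (phi_model f g B x s) + \<psi> x s))"

text \<open>|S_k|^p with the convention 0^0 = 1.\<close>
definition card_pow :: "nat \<Rightarrow> real \<Rightarrow> real" where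
  "card_pow n p = (if p = 0 then 1 else real n powr p)"

end

theory Submission
  imports Defs
begin
lemma bl_mat: "bounded_linear (\<lambda>v. (B::'n::finite mat) *v v)"
  by (simp add: linear_conv_bounded_linear)
lemma mnorm_nonneg: "0 \<le> mnorm B"
  unfolding mnorm_def by (rule onorm_pos_le[OF bl_mat])
lemma quad_le: "s \<bullet> (B *v s) \<le> mnorm B * (norm s)^2"
proof -
  have "s \<bullet> (B *v s) \<le> norm s * norm (B *v s)" by (rule norm_cauchy_schwarz)
  also have "\<dots> \<le> norm s * (mnorm B * norm s)"
    unfolding mnorm_def by (rule mult_left_mono[OF onorm[OF bl_mat]]) simp
  finally show ?thesis by (simp add: power2_eq_square mult_ac)
qed
lemma ma5_fin: "a \<noteq> -\<infinity> \<Longrightarrow> b \<noteq> -\<infinity> \<Longrightarrow> \<bar>(ereal c + a) - (ereal d + b)\<bar> \<le> ereal r \<Longrightarrow> \<bar>a\<bar> \<noteq> \<infinity> \<and> \<bar>b\<bar> \<noteq> \<infinity>"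
  by (cases a; cases b; auto)

lemma key_real:
  fixes fx P0 Ps Pc H fxs gs gc q qs ns nc Bn \<sigma> \<theta>1 \<theta>2 \<eta>1 \<kappa> :: real
  assumes Bn: "Bn \<ge> 0" and sg: "\<sigma> > 0" and t1: "0 < \<theta>1" "\<theta>1 < 1" and e1: "\<eta>1 < 1" and ka: "\<kappa> > 0"
  and MA5: "\<bar>(fxs + H) - ((fx + gs + qs/2) + Ps)\<bar> \<le> \<kappa>*(1+Bn)*ns^2"
  and mm: "(fx + gs + qs/2 + \<sigma>*ns^2/2) + Ps \<le> (fx + gc + q/2 + \<sigma>*nc^2/2) + Pc"
  and cp: "fx + gc + nc^2/(2*(\<theta>1/(Bn+\<sigma>))) + Pc \<le> fx + P0"
  and q: "q \<le> Bn*nc^2"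
  and ns: "0 \<le> ns" "ns \<le> \<theta>2*nc" and nc: "nc>0"
  and big: "\<sigma>*((1-\<eta>1)*(1-\<theta>1)) > 2*\<theta>1*\<kappa>*\<theta>2^2*(1+Bn)"
  shows "fx + P0 - (fx+gs+qs/2) - Ps > 0 \<and> \<eta>1 \<le> (fx + P0 - fxs - H) / (fx + P0 - (fx+gs+qs/2) - Ps)"
proof -
  define Den where "Den = fx + P0 - (fx+gs+qs/2) - Ps"
  define Num where "Num = fx + P0 - fxs - H"
  define D0 where "D0 = (Bn+\<sigma>)*nc^2*(1-\<theta>1)/(2*\<theta>1)"
  have pos: "Bn + \<sigma> > 0" using Bn sg by simp
  have e: "nc^2/(2*(\<theta>1/(Bn+\<sigma>))) = (Bn+\<sigma>)*nc^2/(2*\<theta>1)" using pos t1 by (simp add: field_simps)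
  have s0: "\<sigma>*ns^2/2 \<ge> 0" using sg by simp
  have c1: "P0 - gc - Pc \<ge> (Bn+\<sigma>)*nc^2/(2*\<theta>1)" using cp e by linarith
  have c2: "(Bn+\<sigma>)*nc^2/2 = Bn*nc^2/2 + \<sigma>*nc^2/2" by (simp add: field_simps)
  have "Den \<ge> (Bn+\<sigma>)*nc^2/(2*\<theta>1) - (Bn+\<sigma>)*nc^2/2" unfolding Den_def using mm s0 c1 c2 q by linarith
  moreover have "(Bn+\<sigma>)*nc^2/(2*\<theta>1) - (Bn+\<sigma>)*nc^2/2 = D0" unfolding D0_def using t1 by (simp add: field_simps)
  ultimately have DD: "Den \<ge> D0" by simp
  have D0p: "D0 > 0" unfolding D0_def using pos nc t1 by simp
  have ns2: "ns^2 \<le> \<theta>2^2*nc^2"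
    using power_mono[OF ns(2) ns(1), of 2] by (simp add: power_mult_distrib)
  have Err: "Num \<ge> Den - \<kappa>*(1+Bn)*\<theta>2^2*nc^2"
  proof -
    have "\<kappa>*(1+Bn)*ns^2 \<le> \<kappa>*(1+Bn)*(\<theta>2^2*nc^2)"
      by (rule mult_left_mono[OF ns2]) (use ka Bn in simp)
    thus ?thesis unfolding Num_def Den_def using MA5 by (simp add: abs_le_iff) 
  qed
  have "(1-\<eta>1)*D0 = ((Bn+\<sigma>)*((1-\<eta>1)*(1-\<theta>1)))*nc^2/(2*\<theta>1)" unfolding D0_def by (simp add: field_simps)
  also have "\<dots> \<ge> (\<sigma>*((1-\<eta>1)*(1-\<theta>1)))*nc^2/(2*\<theta>1)"
    using Bn e1 t1 by (intro divide_right_mono mult_right_mono mult_right_mono) auto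
  also have "(\<sigma>*((1-\<eta>1)*(1-\<theta>1)))*nc^2/(2*\<theta>1) \<ge> (2*\<theta>1*\<kappa>*\<theta>2^2*(1+Bn))*nc^2/(2*\<theta>1)"
    using big t1 by (intro divide_right_mono mult_right_mono) auto
  finally have "(1-\<eta>1)*D0 \<ge> (2*\<theta>1*\<kappa>*\<theta>2^2*(1+Bn))*nc^2/(2*\<theta>1)" .
  moreover have "(2*\<theta>1*\<kappa>*\<theta>2^2*(1+Bn))*nc^2/(2*\<theta>1) = \<kappa>*(1+Bn)*\<theta>2^2*nc^2" using t1 by simp
  ultimately have "(1-\<eta>1)*D0 \<ge> \<kappa>*(1+Bn)*\<theta>2^2*nc^2" by simp
  hence "(1-\<eta>1)*Den \<ge> \<kappa>*(1+Bn)*\<theta>2^2*nc^2" using DD e1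
    by (smt (verit) mult_left_mono)
  hence "Num \<ge> \<eta>1 * Den" using Err by (simp add: algebra_simps)
  hence "\<eta>1 \<le> Num/Den" using DD D0p by (simp add: pos_le_divide_eq)
  thus ?thesis using DD D0p unfolding Num_def Den_def by simp
qed
theorem theorem6p3:
  fixes f :: "'n::finite vec \<Rightarrow> real" and gradf :: "'n vec \<Rightarrow> 'n vec"
    and h :: "'n vec \<Rightarrow> ereal"
    and \<psi> :: "'n vec \<Rightarrow> 'n vec \<Rightarrow> ereal"
    and Bf :: "'n vec \<Rightarrow> 'n mat"
    and \<theta>\<^sub>1 \<theta>\<^sub>2 \<eta>\<^sub>1 \<eta>\<^sub>2 \<gamma>\<^sub>1 \<gamma>\<^sub>2 \<gamma>\<^sub>3 :: real
    and x s st scp :: "nat \<Rightarrow> 'n vec" and B :: "nat \<Rightarrow> 'n mat"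
    and \<sigma> \<nu> :: "nat \<Rightarrow> real" and \<rho> :: "nat \<Rightarrow> ereal"
  (* setting *)
  assumes f_grad: "\<And>y. GDERIV f y :> gradf y"
    and gradf_cont: "continuous_on UNIV gradf"
    and h_proper: "proper_fun h" and h_lsc: "lsc_fun h"
    and Bf_sym: "\<And>y. symmetric_mat (Bf y)"
  (* (MA1) *)
    and MA1: "\<And>y. proper_fun (\<psi> y) \<and> lsc_fun (\<psi> y) \<and> prox_bounded (\<psi> y) \<and>
                  \<psi> y 0 = h y \<and> limiting_subdiff (\<psi> y) 0 = limiting_subdiff h y"
  (* (MA2) *)
    and MA2: "\<exists>lam::ereal. lam > 0 \<and> (\<forall>y. prox_threshold (\<psi> y) \<ge> lam)"
  (* (MA5) *)
    and MA5: "\<exists>\<kappa>m>0. \<forall>k. \<bar>(ereal (f (x k + s k)) + h (x k + s k))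
                   - (ereal (phi_model f gradf (B k) (x k) (s k)) + \<psi> (x k) (s k))\<bar>
                 \<le> ereal (\<kappa>m * (1 + mnorm (B k)) * (norm (s k))\<^sup>2)"
  (* (MA6) *)
    and MA6: "\<exists>\<mu>>0. \<exists>p. 0 \<le> p \<and> p \<le> 1 \<and>
                (\<forall>k. mnorm (B k) \<le> \<mu> * (1 + card_pow (card {i. \<rho> i \<ge> ereal \<eta>\<^sub>1 \<and> i \<le> k}) p))"
  (* constants of Algorithm R2N *)
    and params: "0 < \<theta>\<^sub>1" "\<theta>\<^sub>1 < 1" "1 < \<theta>\<^sub>2" "0 < \<eta>\<^sub>1" "\<eta>\<^sub>1 \<le> \<eta>\<^sub>2" "\<eta>\<^sub>2 < 1"
               "0 < \<gamma>\<^sub>3" "\<gamma>\<^sub>3 \<le> 1" "1 < \<gamma>\<^sub>1" "\<gamma>\<^sub>1 \<le> \<gamma>\<^sub>2"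
    and init: "h (x 0) < \<infinity>" "\<sigma> 0 > 0"
  (* iterations of Algorithm R2N *)
    and B_def: "\<And>k. B k = Bf (x k)"
    and nu_def: "\<And>k. \<nu> k = \<theta>\<^sub>1 / (mnorm (B k) + \<sigma> k)"
    and scp_def: "\<And>k. scp k \<in> argmin_set (m_cp f gradf \<psi> (x k) (\<nu> k))"
    and st_def: "\<And>k. m_model f gradf (B k) \<psi> (x k) (\<sigma> k) (st k)
                      \<le> m_model f gradf (B k) \<psi> (x k) (\<sigma> k) (scp k)"
    and s_def: "\<And>k. s k = (if norm (st k) > \<theta>\<^sub>2 * norm (scp k) then scp k else st k)"
    and rho_def: "\<And>k. \<rho> k = rho_ratio f gradf h (B k) \<psi> (x k) (s k)"
    and x_next: "\<And>k. x (Suc k) = (if \<rho> k \<ge> ereal \<eta>\<^sub>1 then x k + s k else x k)"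
    and sigma_vs: "\<And>k. \<rho> k \<ge> ereal \<eta>\<^sub>2 \<Longrightarrow> \<gamma>\<^sub>3 * \<sigma> k \<le> \<sigma> (Suc k) \<and> \<sigma> (Suc k) \<le> \<sigma> k"
    and sigma_s: "\<And>k. ereal \<eta>\<^sub>1 \<le> \<rho> k \<Longrightarrow> \<rho> k < ereal \<eta>\<^sub>2 \<Longrightarrow>
                      \<sigma> k \<le> \<sigma> (Suc k) \<and> \<sigma> (Suc k) \<le> \<gamma>\<^sub>1 * \<sigma> k"
    and sigma_u: "\<And>k. \<rho> k < ereal \<eta>\<^sub>1 \<Longrightarrow>
                      \<gamma>\<^sub>1 * \<sigma> k \<le> \<sigma> (Suc k) \<and> \<sigma> (Suc k) \<le> \<gamma>\<^sub>2 * \<sigma> k"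
  (* finitely many successful iterations *)
    and fin: "finite {k. \<rho> k \<ge> ereal \<eta>\<^sub>1}"
  shows "\<exists>xs. (\<exists>N. \<forall>k\<ge>N. x k = xs) \<and> - gradf xs \<in> limiting_subdiff h xs"
proof -
  define S where "S = {k. \<rho> k \<ge> ereal \<eta>\<^sub>1}"
  obtain N where N: "\<forall>k\<in>S. k < N" using finite_nat_bounded[OF fin[folded S_def]] by blast
  have unsucc: "\<not> \<rho> k \<ge> ereal \<eta>\<^sub>1" if "k \<ge> N" for k using N that unfolding S_def by fastforce
  define xs where "xs = x N"
  have xconst: "x k = xs" if "k \<ge> N" for k using that
  proof (induct k rule: dec_induct)
    case base then show ?case by (simp add: xs_def)
  next
    case (step k) then show ?case using x_next[of k] unsucc[of k] by simp
  qed
  have sig_pos: "\<sigma> k > 0" for k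
  proof (induct k)
    case 0 then show ?case using init by simp
  next
    case (Suc k)
    show ?case
    proof (cases "\<rho> k \<ge> ereal \<eta>\<^sub>2")
      case True then show ?thesis using sigma_vs[of k] Suc params
        by (smt (verit) mult_pos_pos)
    next
      case F: False
      show ?thesis
      proof (cases "\<rho> k \<ge> ereal \<eta>\<^sub>1")
        case True then show ?thesis using sigma_s[of k] F Suc by (simp add: not_le)
      next
        case False then show ?thesis using sigma_u[of k] Suc params
          by (smt (verit) mult_pos_pos not_le)
      qed
    qed
  qed
  have sig_grow: "\<sigma> (N + j) \<ge> \<gamma>\<^sub>1 ^ j * \<sigma> N" for j
  proof (induct j)
    case 0 then show ?case by simp
  next
    case (Suc j)
    have "\<rho> (N + j) < ereal \<eta>\<^sub>1" using unsucc[of "N+j"] by (simp add: not_le)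
    hence "\<gamma>\<^sub>1 * \<sigma> (N+j) \<le> \<sigma> (Suc (N+j))" using sigma_u by blast
    moreover have "\<gamma>\<^sub>1 ^ Suc j * \<sigma> N \<le> \<gamma>\<^sub>1 * \<sigma> (N+j)"
      using Suc params by (simp add: mult.assoc)
    ultimately show ?case by simp
  qed
  obtain \<kappa> where ka: "\<kappa> > 0" and ka5: "\<And>k. \<bar>(ereal (f (x k + s k)) + h (x k + s k))
                   - (ereal (phi_model f gradf (B k) (x k) (s k)) + \<psi> (x k) (s k))\<bar>
                 \<le> ereal (\<kappa> * (1 + mnorm (B k)) * (norm (s k))\<^sup>2)"
    using MA5 by blast
  have hprop: "h y \<noteq> -\<infinity>" for y using h_proper unfolding proper_fun_def by blast
  have psiprop: "\<psi> y t \<noteq> -\<infinity>" for y t using MA1[of y] unfolding proper_fun_def by blast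
  have finstep: "\<bar>h (x k + s k)\<bar> \<noteq> \<infinity> \<and> \<bar>\<psi> (x k) (s k)\<bar> \<noteq> \<infinity>" for k
    using ma5_fin[OF hprop psiprop ka5[of k]] .
  have hfin: "\<bar>h (x k)\<bar> \<noteq> \<infinity>" for k
  proof (induct k)
    case 0 then show ?case using init hprop[of "x 0"] by (cases "h (x 0)") auto
  next
    case (Suc k) then show ?case using x_next[of k] finstep[of k] by simp
  qed
  define Bn where "Bn = mnorm (Bf xs)"
  have Bn0: "Bn \<ge> 0" unfolding Bn_def by (rule mnorm_nonneg)
  have BN: "B k = Bf xs" if "k \<ge> N" for k using B_def xconst that by simp
  define C where "C = 2*\<theta>\<^sub>1*\<kappa>*\<theta>\<^sub>2^2*(1+Bn) / ((1-\<eta>\<^sub>1)*(1-\<theta>\<^sub>1))"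
  obtain j where j: "C / \<sigma> N < \<gamma>\<^sub>1 ^ j" using real_arch_pow[of \<gamma>\<^sub>1 "C / \<sigma> N"] params by blast
  define k where "k = N + j"
  have kN: "k \<ge> N" unfolding k_def by simp
  have sk: "\<sigma> k > C"
  proof -
    have "C < \<gamma>\<^sub>1 ^ j * \<sigma> N" using j sig_pos[of N] by (simp add: divide_less_eq)
    thus ?thesis using sig_grow[of j] unfolding k_def by simp
  qed
  have e1: "0 < 1 - \<eta>\<^sub>1" and t1: "0 < 1 - \<theta>\<^sub>1" using params by auto
  have big: "\<sigma> k*((1-\<eta>\<^sub>1)*(1-\<theta>\<^sub>1)) > 2*\<theta>\<^sub>1*\<kappa>*\<theta>\<^sub>2^2*(1+Bn)"
    using sk e1 t1 unfolding C_def by (simp add: pos_divide_less_eq)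
  have xk: "x k = xs" and Bk: "B k = Bf xs" using xconst[OF kN] BN[OF kN] by auto
  have nupos: "\<nu> k > 0" using nu_def[of k] params sig_pos[of k] mnorm_nonneg[of "B k"] by simp
  have P0: "\<psi> xs 0 = h xs" using MA1 by blast
  obtain P0r where P0r: "h xs = ereal P0r" using hfin[of k] xk by (cases "h xs") auto
  have cpmin: "m_cp f gradf \<psi> xs (\<nu> k) (scp k) \<le> m_cp f gradf \<psi> xs (\<nu> k) t" for t
    using scp_def[of k] xk unfolding argmin_set_def by auto
  have scp0: "scp k = 0"
  proof (rule ccontr)
    assume ne: "scp k \<noteq> 0"
    define nc where "nc = norm (scp k)"
    have nc: "nc > 0" using ne unfolding nc_def by simp
    obtain Ps where Ps: "\<psi> xs (s k) = ereal Ps" using finstep[of k] xk by (cases "\<psi> xs (s k)") auto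
    obtain H where H: "h (xs + s k) = ereal H" using finstep[of k] xk by (cases "h (xs + s k)") auto
    have c0: "m_cp f gradf \<psi> xs (\<nu> k) (scp k) \<le> m_cp f gradf \<psi> xs (\<nu> k) 0" by (rule cpmin)
    obtain Pc where Pc: "\<psi> xs (scp k) = ereal Pc"
      using c0 psiprop[of xs "scp k"] P0 P0r unfolding m_cp_def
      by (cases "\<psi> xs (scp k)") auto
    have cp: "f xs + gradf xs \<bullet> scp k + nc^2/(2*(\<theta>\<^sub>1/(Bn+\<sigma> k))) + Pc \<le> f xs + P0r"
      using c0 P0 P0r Pc nu_def[of k] Bk unfolding m_cp_def phi_cp_def nc_def Bn_def by simp
    have mm0: "m_model f gradf (B k) \<psi> (x k) (\<sigma> k) (s k) \<le> m_model f gradf (B k) \<psi> (x k) (\<sigma> k) (scp k)"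
      using s_def[of k] st_def[of k] by (cases "norm (st k) > \<theta>\<^sub>2 * norm (scp k)") auto
    have mm: "(f xs + gradf xs \<bullet> s k + (s k \<bullet> (Bf xs *v s k))/2 + \<sigma> k*(norm (s k))^2/2) + Ps
        \<le> (f xs + gradf xs \<bullet> scp k + (scp k \<bullet> (Bf xs *v scp k))/2 + \<sigma> k*nc^2/2) + Pc"
      using mm0 xk Bk Ps Pc unfolding m_model_def phi_model_def nc_def by simp
    have ma: "\<bar>(f (xs + s k) + H) - ((f xs + gradf xs \<bullet> s k + (s k \<bullet> (Bf xs *v s k))/2) + Ps)\<bar>
        \<le> \<kappa>*(1+Bn)*(norm (s k))^2"
      using ka5[of k] xk Bk Ps H unfolding phi_model_def Bn_def by simp
    have q: "scp k \<bullet> (Bf xs *v scp k) \<le> Bn*nc^2" unfolding Bn_def nc_def by (rule quad_le)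
    have ns: "norm (s k) \<le> \<theta>\<^sub>2*nc"
    proof (cases "norm (st k) > \<theta>\<^sub>2 * norm (scp k)")
      case True
      have "1 * norm (scp k) \<le> \<theta>\<^sub>2 * norm (scp k)" using params by (intro mult_right_mono) auto
      thus ?thesis using True s_def[of k] unfolding nc_def by simp
    next
      case False thus ?thesis using s_def[of k] unfolding nc_def by simp
    qed
    have K: "f xs + P0r - (f xs + gradf xs \<bullet> s k + (s k \<bullet> (Bf xs *v s k))/2) - Ps > 0 \<and>
      \<eta>\<^sub>1 \<le> (f xs + P0r - f (xs + s k) - H) / (f xs + P0r - (f xs + gradf xs \<bullet> s k + (s k \<bullet> (Bf xs *v s k))/2) - Ps)"
      by (rule key_real[OF Bn0 sig_pos[of k] params(1) params(2) _ ka ma mm cp q norm_ge_zero ns nc big])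
        (use params in linarith)
    have "\<rho> k = ereal ((f xs + P0r - f (xs + s k) - H) / (f xs + P0r - (f xs + gradf xs \<bullet> s k + (s k \<bullet> (Bf xs *v s k))/2) - Ps))"
      using K rho_def[of k] xk Bk P0 P0r Ps H unfolding rho_ratio_def phi_model_def
      by (simp add: ereal_divide) (simp add: algebra_simps)
    hence "\<rho> k \<ge> ereal \<eta>\<^sub>1" using K by simp
    thus False using unsucc[OF kN] by simp
  qed
  have fr: "- gradf xs \<in> frechet_subdiff (\<psi> xs) 0"
    unfolding frechet_subdiff_def
  proof (intro CollectI conjI allI impI)
    show "\<bar>\<psi> xs 0\<bar> \<noteq> \<infinity>" using P0 P0r by simp
    fix \<epsilon> :: real assume ep: "\<epsilon> > 0"
    show "\<exists>\<delta>>0. \<forall>y. norm (y - 0) < \<delta> \<longrightarrow> \<psi> xs 0 + ereal (- gradf xs \<bullet> (y - 0) - \<epsilon> * norm (y - 0)) \<le> \<psi> xs y"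
    proof (intro exI[of _ "2 * \<nu> k * \<epsilon>"] conjI allI impI)
      show "2 * \<nu> k * \<epsilon> > 0" using nupos ep by simp
      fix y :: "'n vec" assume yd: "norm (y - 0) < 2 * \<nu> k * \<epsilon>"
      show "\<psi> xs 0 + ereal (- gradf xs \<bullet> (y - 0) - \<epsilon> * norm (y - 0)) \<le> \<psi> xs y"
      proof (cases "\<psi> xs y")
        case (real Py)
        have c: "f xs + P0r \<le> f xs + gradf xs \<bullet> y + (norm y)^2/(2*\<nu> k) + Py"
          using cpmin[of y] scp0 P0 P0r real unfolding m_cp_def phi_cp_def by simp
        have "(norm y)^2/(2*\<nu> k) \<le> \<epsilon> * norm y"
        proof -
          have "(norm y)^2 \<le> (2*\<nu> k*\<epsilon>) * norm y" using yd
            by (simp add: power2_eq_square mult_right_mono)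
          thus ?thesis using nupos by (simp add: divide_le_eq mult_ac)
        qed
        thus ?thesis using c P0 P0r real by simp
      next
        case PInf then show ?thesis by simp
      next
        case MInf then show ?thesis using psiprop by simp
      qed
    qed
  qed
  have "- gradf xs \<in> limiting_subdiff (\<psi> xs) 0"
    unfolding limiting_subdiff_def
    using fr P0 P0r by (intro CollectI conjI exI[of _ "\<lambda>_. 0"] exI[of _ "\<lambda>_. - gradf xs"]) auto
  hence "- gradf xs \<in> limiting_subdiff h xs" using MA1 by blast
  thus ?thesis using xconst by blast
qed

end
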